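(* Let $0<q<1$, let $k,n$ be nonnegative integers and let $x\in[0,1]$. Then $$B_{k,n}(x,q)=\sum_{i=k}^{n}\binom{i}{k}\binom{n}{i}(-1)^{i-k}q^{(1-x)(i-k)}[x]_q^{i},$$ where an empty sum (when $k>n$) is $0$.
   Context: Let $q$ be a real number with $0<q<1$. For real $x$, the $q$-number is $[x]_q=\frac{1-q^x}{1-q}$. For a nonnegative integer $k$ and $x\in[0,1]$, the modified $q$-Bernstein polynomials $B_{k,n}(x,q)$, $n=0,1,2,\dots$, are defined by the generating function $$\frac{t^k e^{[1-x]_q t}[x]_q^k}{k!}=\sum_{n=0}^\infty B_{k,n}(x,q)\frac{t^n}{n!}.$$ *)

theory Defs
  imports "HOL-Computational_Algebra.Formal_Power_Series"
begin

definition q_num :: "real \<Rightarrow> real \<Rightarrow> real" where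
  "q_num q x = (1 - q powr x) / (1 - q)"

definition qB_gen :: "nat \<Rightarrow> real \<Rightarrow> real \<Rightarrow> real fps" where
  "qB_gen k x q = fps_const (q_num q x ^ k / fact k) * fps_X ^ k * fps_exp (q_num q (1 - x))"

definition qBernstein :: "nat \<Rightarrow> nat \<Rightarrow> real \<Rightarrow> real \<Rightarrow> real" where
  "qBernstein k n x q = fact n * fps_nth (qB_gen k x q) n"

end

theory Submission
  imports Defs
begin

lemma lhs_eq:
  assumes "k \<le> n"
  shows "qBernstein k n x q = real (n choose k) * q_num q x ^ k * q_num q (1 - x) ^ (n - k)"
proof -
  have "qBernstein k n x q = fact n * (q_num q x ^ k / fact k) * (q_num q (1 - x) ^ (n - k) / fact (n - k))"
    using assms unfolding qBernstein_def qB_gen_def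
    by (simp add: mult.assoc fps_X_power_mult_nth)
  also have "\<dots> = real (n choose k) * q_num q x ^ k * q_num q (1 - x) ^ (n - k)"
    using binomial_fact[OF assms, where 'a=real] by (simp add: field_simps)
  finally show ?thesis .
qed

lemma aux:
  fixes A B C D s r u v w :: real
  assumes "w = s * r * v" "A * B = C * D"
  shows "B * A * s * r * (u * v) = C * u * (D * w)"
proof -
  have "B * A * s * r * (u * v) = (A * B) * (s * r * v * u)" by (simp add: mult_ac)
  also have "\<dots> = (C * D) * (s * r * v * u)" using assms(2) by simp
  also have "\<dots> = C * u * (D * w)" using assms(1) by (simp add: mult_ac)
  finally show ?thesis .
qed

lemma lhs_zero:
  assumes "n < k"
  shows "qBernstein k n x q = 0"
  using assms unfolding qBernstein_def qB_gen_def
  by (simp add: mult.assoc fps_X_power_mult_nth)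

theorem theorem6:
  fixes q x :: real and k n :: nat
  assumes "0 < q" "q < 1" "0 \<le> x" "x \<le> 1"
  shows "qBernstein k n x q =
    (\<Sum>i=k..n. real (i choose k) * real (n choose i) * (-1) ^ (i - k)
       * q powr ((1 - x) * real (i - k)) * q_num q x ^ i)"
proof (cases "k \<le> n")
  case False
  then show ?thesis using lhs_zero by simp
next
  case True
  define b where "b = q_num q x"
  define r where "r = q powr (1 - x)"
  have key: "q_num q (1 - x) = - r * b + 1"
    using assms unfolding b_def r_def q_num_def
    by (simp add: field_simps powr_add[symmetric])
  have "(\<Sum>i=k..n. real (i choose k) * real (n choose i) * (-1) ^ (i - k)
       * q powr ((1 - x) * real (i - k)) * q_num q x ^ i)
      = (\<Sum>j=0..n-k. real (k+j choose k) * real (n choose (k+j)) * (-1) ^ j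
       * r ^ j * b ^ (k+j))"
  proof -
    have sh: "(\<Sum>i=k..n. f i) = (\<Sum>j=0..n-k. f (k+j))" for f :: "nat \<Rightarrow> real"
      using sum.shift_bounds_cl_nat_ivl[of f 0 k "n-k"] True by (simp add: add.commute)
    show ?thesis unfolding sh
    proof (rule sum.cong[OF refl])
      fix j
      have "q powr ((1 - x) * real j) = r ^ j"
        unfolding r_def using assms by (simp add: powr_realpow[symmetric] powr_powr)
      thus "real (k + j choose k) * real (n choose (k + j)) * (- 1) ^ (k + j - k) *
         q powr ((1 - x) * real (k + j - k)) * q_num q x ^ (k + j) =
         real (k + j choose k) * real (n choose (k + j)) * (- 1) ^ j * r ^ j * b ^ (k + j)"
        unfolding b_def by simp
    qed
  qed
  also have "\<dots> = (\<Sum>j=0..n-k. real (n choose k) * b ^ k *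
        (real (n - k choose j) * (- r * b) ^ j * 1 ^ (n - k - j)))"
  proof (rule sum.cong[OF refl])
    fix j assume j: "j \<in> {0..n-k}"
    have "(n choose (k+j)) * (k+j choose k) = (n choose k) * ((n - k) choose j)"
      using choose_mult[of k "k+j" n] j True by simp
    hence "real (n choose (k+j)) * real (k+j choose k) = real (n choose k) * real ((n - k) choose j)"
      by (metis of_nat_mult)
    show "real (k+j choose k) * real (n choose (k+j)) * (-1) ^ j * r ^ j * b ^ (k+j)
        = real (n choose k) * b ^ k * (real (n - k choose j) * (- r * b) ^ j * 1 ^ (n - k - j))"
      proof -
      have "(- r * b) ^ j = (-1) ^ j * r ^ j * b ^ j"
        by (metis mult_minus1 power_mult_distrib)
      then show ?thesis using \<open>real (n choose (k+j)) * real (k+j choose k) = _\<close>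
        unfolding power_add power_one mult_1_right by (rule aux)
    qed
  qed
  also have "\<dots> = real (n choose k) * b ^ k * (- r * b + 1) ^ (n - k)"
    by (simp only: binomial_ring[of "- r * b" 1 "n - k"] sum_distrib_left atMost_atLeast0)
  finally show ?thesis using lhs_eq[OF True] key unfolding b_def by simp
qed

end
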